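(* Let $p\in(0,1]$ and let $q\ge1$ be an integer. Then $\gamma_\infty^*\ge\big(1-(1-p)^q\big)\gamma_{\infty,q}^*$.
   Context: For an integer $q\ge1$, $\gamma_{\infty,q}^*$ is the optimal value (supremum) of $(CLP)_{p,q}$: maximize $\gamma$ over $\gamma\ge0$ and measurable $\alpha:[0,1]\times\{1,2,\dots\}\to[0,1]$ subject to $t\,\alpha(t,s)\le1-p\int_0^t\sum_{\sigma\ge1}\alpha(\tau,\sigma)\,d\tau$ for all $t\in[0,1],s\ge1$, and $\gamma\le\frac{p}{1-(1-p)^k}\int_0^1\sum_{s\ge1}\alpha(t,s)\sum_{\ell=s}^k\binom{\ell-1}{s-1}t^s(1-t)^{\ell-s}\,dt$ for all $k\in[q]$. $\gamma_\infty^*$ is the optimal value of the same program with the second family of constraints imposed for all $k\ge1$. *)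

theory Defs
  imports "HOL-Analysis.Analysis"
begin

text \<open>Feasibility of alpha in (CLP)_p: alpha is measurable on [0,1] x {1,2,...}, takes values
  in [0,1] there, and satisfies the capacity constraint
  t * alpha(t,s) <= 1 - p * int_0^t sum_{sigma>=1} alpha(tau,sigma) dtau
  for all t in [0,1], s >= 1. The (possibly infinite) integral of the series is taken as a
  nonnegative (extended) integral; the constraint is stated with it moved to the left side.\<close>
definition clp_alpha_feasible :: "real \<Rightarrow> (real \<Rightarrow> nat \<Rightarrow> real) \<Rightarrow> bool" where
  "clp_alpha_feasible p \<alpha> \<longleftrightarrow>
     (\<forall>s\<ge>1. (\<lambda>t. \<alpha> t s) \<in> borel_measurable (restrict_space lborel {0..1})) \<and>
     (\<forall>t\<in>{0..1}. \<forall>s\<ge>1. 0 \<le> \<alpha> t s \<and> \<alpha> t s \<le> 1) \<and>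
     (\<forall>t\<in>{0..1}. \<forall>s\<ge>1.
        ennreal (t * \<alpha> t s)
        + ennreal p * (\<integral>\<^sup>+ \<tau>. (\<Sum>\<sigma>. ennreal (\<alpha> \<tau> (Suc \<sigma>))) * indicator {0..t} \<tau> \<partial>lborel)
        \<le> 1)"

text \<open>Terms with s > k vanish (empty inner sum), so the outer sum runs over s in {1..k}.\<close>
definition clp_obj :: "real \<Rightarrow> (real \<Rightarrow> nat \<Rightarrow> real) \<Rightarrow> nat \<Rightarrow> real" where
  "clp_obj p \<alpha> k = p / (1 - (1 - p) ^ k) *
     (\<integral>t\<in>{0..1}. (\<Sum>s\<in>{1..k}. \<alpha> t s *
        (\<Sum>l\<in>{s..k}. real ((l - 1) choose (s - 1)) * t ^ s * (1 - t) ^ (l - s))) \<partial>lborel)"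

definition gamma_q :: "real \<Rightarrow> nat \<Rightarrow> real" where
  "gamma_q p q = Sup {\<gamma>. 0 \<le> \<gamma> \<and> (\<exists>\<alpha>. clp_alpha_feasible p \<alpha> \<and>
                         (\<forall>k\<in>{1..q}. \<gamma> \<le> clp_obj p \<alpha> k))}"

definition gamma_inf :: "real \<Rightarrow> real" where
  "gamma_inf p = Sup {\<gamma>. 0 \<le> \<gamma> \<and> (\<exists>\<alpha>. clp_alpha_feasible p \<alpha> \<and>
                         (\<forall>k\<ge>1. \<gamma> \<le> clp_obj p \<alpha> k))}"

end

theory Submission imports Defs begin

definition G :: "(real \<Rightarrow> nat \<Rightarrow> real) \<Rightarrow> nat \<Rightarrow> real \<Rightarrow> real" where
  "G \<alpha> k t = (\<Sum>s\<in>{1..k}. \<alpha> t s *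
        (\<Sum>l\<in>{s..k}. real ((l - 1) choose (s - 1)) * t ^ s * (1 - t) ^ (l - s)))"

lemma fin01: "finite_measure (restrict_space lborel {0..1::real})"
  by (intro finite_measureI) (simp add: space_restrict_space emeasure_restrict_space)

lemma G_int:
  assumes "clp_alpha_feasible p \<alpha>"
  shows "set_integrable lborel {0..1} (G \<alpha> k)"
proof -
  have meas: "\<And>s. s \<ge> 1 \<Longrightarrow> (\<lambda>t. \<alpha> t s) \<in> borel_measurable (restrict_space lborel {0..1})"
    using assms unfolding clp_alpha_feasible_def by auto
  have "G \<alpha> k \<in> borel_measurable (restrict_space lborel {0..1})"
    unfolding G_def
    by (intro borel_measurable_sum borel_measurable_times meas measurable_restrict_space1) auto
  moreover have "AE t in restrict_space lborel {0..1}. norm (G \<alpha> k t) \<le> (\<Sum>s\<in>{1..k}. \<Sum>l\<in>{s..k}. real ((l - 1) choose (s - 1)))"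
  proof (rule AE_I2)
    fix t assume "t \<in> space (restrict_space lborel {0..1::real})"
    hence t: "0 \<le> t" "t \<le> 1" by (auto simp: space_restrict_space)
    have a: "\<And>s. s \<in> {1..k} \<Longrightarrow> 0 \<le> \<alpha> t s \<and> \<alpha> t s \<le> 1"
      using assms t unfolding clp_alpha_feasible_def by auto
    have "norm (G \<alpha> k t) \<le> (\<Sum>s\<in>{1..k}. norm (\<alpha> t s *
        (\<Sum>l\<in>{s..k}. real ((l - 1) choose (s - 1)) * t ^ s * (1 - t) ^ (l - s))))"
      unfolding G_def by (rule norm_sum)
    also have "\<dots> \<le> (\<Sum>s\<in>{1..k}. \<Sum>l\<in>{s..k}. real ((l - 1) choose (s - 1)))"
    proof (rule sum_mono)
      fix s assume s: "s \<in> {1..k}"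
      have in0: "0 \<le> (\<Sum>l\<in>{s..k}. real ((l - 1) choose (s - 1)) * t ^ s * (1 - t) ^ (l - s))"
        using t by (intro sum_nonneg) auto
      have inb: "(\<Sum>l\<in>{s..k}. real ((l - 1) choose (s - 1)) * t ^ s * (1 - t) ^ (l - s))
          \<le> (\<Sum>l\<in>{s..k}. real ((l - 1) choose (s - 1)))"
      proof (rule sum_mono)
        fix l
        have "t ^ s * (1 - t) ^ (l - s) \<le> 1 * 1"
          using t by (intro mult_mono power_le_one) auto
        thus "real ((l - 1) choose (s - 1)) * t ^ s * (1 - t) ^ (l - s) \<le> real ((l - 1) choose (s - 1))"
          by (metis mult.assoc mult_left_le of_nat_0_le_iff mult_1)
      qed
      show "norm (\<alpha> t s * (\<Sum>l\<in>{s..k}. real ((l - 1) choose (s - 1)) * t ^ s * (1 - t) ^ (l - s)))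
          \<le> (\<Sum>l\<in>{s..k}. real ((l - 1) choose (s - 1)))"
      proof -
        have "norm (\<alpha> t s * (\<Sum>l\<in>{s..k}. real ((l - 1) choose (s - 1)) * t ^ s * (1 - t) ^ (l - s)))
           = \<alpha> t s * (\<Sum>l\<in>{s..k}. real ((l - 1) choose (s - 1)) * t ^ s * (1 - t) ^ (l - s))"
          using a[OF s] in0 by simp
        also have "\<dots> \<le> 1 * (\<Sum>l\<in>{s..k}. real ((l - 1) choose (s - 1)))"
          using a[OF s] in0 inb by (intro mult_mono) auto
        finally show ?thesis by simp
      qed
    qed
    finally show "norm (G \<alpha> k t) \<le> (\<Sum>s\<in>{1..k}. \<Sum>l\<in>{s..k}. real ((l - 1) choose (s - 1)))" .
  qed
  ultimately have "integrable (restrict_space lborel {0..1}) (G \<alpha> k)"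
    by (intro finite_measure.integrable_const_bound[OF fin01])
  thus ?thesis unfolding set_integrable_def
    by (subst (asm) integrable_restrict_space) auto
qed

lemma G_mono:
  assumes "clp_alpha_feasible p \<alpha>" "q \<le> k" "0 \<le> t" "t \<le> 1"
  shows "G \<alpha> q t \<le> G \<alpha> k t"
proof -
  have a: "\<And>s. s \<ge> 1 \<Longrightarrow> 0 \<le> \<alpha> t s"
    using assms unfolding clp_alpha_feasible_def by auto
  have "G \<alpha> q t \<le> (\<Sum>s\<in>{1..q}. \<alpha> t s *
        (\<Sum>l\<in>{s..k}. real ((l - 1) choose (s - 1)) * t ^ s * (1 - t) ^ (l - s)))"
    unfolding G_def
  proof (rule sum_mono)
    fix s assume s: "s \<in> {1..q}"
    show "\<alpha> t s * (\<Sum>l\<in>{s..q}. real ((l - 1) choose (s - 1)) * t ^ s * (1 - t) ^ (l - s))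
        \<le> \<alpha> t s * (\<Sum>l\<in>{s..k}. real ((l - 1) choose (s - 1)) * t ^ s * (1 - t) ^ (l - s))"
      using s assms a[of s] by (intro mult_left_mono sum_mono2) auto
  qed
  also have "\<dots> \<le> G \<alpha> k t"
    unfolding G_def using assms a by (intro sum_mono2 mult_nonneg_nonneg sum_nonneg) auto
  finally show ?thesis .
qed

lemma obj_G: "clp_obj p \<alpha> k = p / (1 - (1 - p) ^ k) * (LINT t:{0..1}|lborel. G \<alpha> k t)"
  unfolding clp_obj_def G_def ..

lemma feas0: "clp_alpha_feasible p (\<lambda>t s. 0)"
  unfolding clp_alpha_feasible_def by simp

lemma obj1_le:
  assumes "clp_alpha_feasible p \<alpha>" "0 < p"
  shows "clp_obj p \<alpha> 1 \<le> 1"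
proof -
  have "clp_obj p \<alpha> 1 = (LINT t:{0..1}|lborel. G \<alpha> 1 t)"
    using assms by (simp add: obj_G)
  also have "\<dots> \<le> (LINT (t::real):{0..1}|lborel. (1::real))"
  proof (rule set_integral_mono)
    show "set_integrable lborel {0..1} (G \<alpha> 1)" by (rule G_int[OF assms(1)])
    show "set_integrable lborel {0..1::real} (\<lambda>t. 1::real)"
      by (intro borel_integrable_atLeastAtMost') auto
    fix t :: real assume t: "t \<in> {0..1}"
    have "G \<alpha> 1 t = \<alpha> t 1 * t" by (simp add: G_def)
    also have "\<dots> \<le> 1 * 1"
      using assms t unfolding clp_alpha_feasible_def by (intro mult_mono) auto
    finally show "G \<alpha> 1 t \<le> 1" by simp
  qed
  also have "\<dots> = 1" by (simp add: set_lebesgue_integral_def)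
  finally show ?thesis .
qed

theorem mainTheorem14:
  fixes p :: real and q :: nat
  assumes "0 < p" and "p \<le> 1" and "1 \<le> q"
  shows "gamma_inf p \<ge> (1 - (1 - p) ^ q) * gamma_q p q"
proof -
  have dpos: "0 < 1 - (1 - p) ^ k" "1 - (1 - p) ^ k \<le> 1" if "k \<ge> 1" for k :: nat
  proof -
    have "(1 - p) ^ k \<le> (1 - p) ^ 1" using assms that by (intro power_decreasing) auto
    hence "(1 - p) ^ k < 1" using assms by simp
    moreover have "0 \<le> (1 - p) ^ k" using assms by simp
    ultimately show "0 < 1 - (1 - p) ^ k" "1 - (1 - p) ^ k \<le> 1" by auto
  qed
  define c where "c = 1 - (1 - p) ^ q"
  have c: "0 < c" "c \<le> 1" using dpos[OF assms(3)] by (auto simp: c_def)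
  define Sq where "Sq = {\<gamma>. 0 \<le> \<gamma> \<and> (\<exists>\<alpha>. clp_alpha_feasible p \<alpha> \<and>
                         (\<forall>k\<in>{1..q}. \<gamma> \<le> clp_obj p \<alpha> k))}"
  define Si where "Si = {\<gamma>. 0 \<le> \<gamma> \<and> (\<exists>\<alpha>. clp_alpha_feasible p \<alpha> \<and>
                         (\<forall>k\<ge>1. \<gamma> \<le> clp_obj p \<alpha> k))}"
  have bdd: "bdd_above Si"
  proof (rule bdd_aboveI)
    fix x assume "x \<in> Si"
    then obtain \<alpha> where "clp_alpha_feasible p \<alpha>" "x \<le> clp_obj p \<alpha> 1" unfolding Si_def by auto
    thus "x \<le> 1" using obj1_le[OF _ assms(1)] by force
  qed
  have ne: "Sq \<noteq> {}"
  proof -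
    have "0 \<in> Sq" unfolding Sq_def using feas0[of p] by (auto simp: clp_obj_def)
    thus ?thesis by auto
  qed
  have key: "c * \<gamma> \<in> Si" if gS: "\<gamma> \<in> Sq" for \<gamma>
  proof -
    obtain \<alpha> where g0: "0 \<le> \<gamma>" and f: "clp_alpha_feasible p \<alpha>"
      and h: "\<And>k. k \<in> {1..q} \<Longrightarrow> \<gamma> \<le> clp_obj p \<alpha> k"
      using gS unfolding Sq_def by blast
    have "c * \<gamma> \<le> clp_obj p \<alpha> k" if k: "k \<ge> 1" for k
    proof (cases "k \<le> q")
      case True
      have "c * \<gamma> \<le> 1 * \<gamma>" using c g0 by (intro mult_right_mono) auto
      thus ?thesis using h[of k] True k by auto
    next
      case False
      define Iq where "Iq = (LINT t:{0..1}|lborel. G \<alpha> q t)"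
      define Ik where "Ik = (LINT t:{0..1}|lborel. G \<alpha> k t)"
      have "Iq \<le> Ik" unfolding Iq_def Ik_def
        using False by (intro set_integral_mono G_int[OF f] G_mono[OF f]) auto
      have "\<gamma> \<le> p / c * Iq" using h[of q] assms(3) by (simp add: obj_G Iq_def c_def)
      hence "c * \<gamma> \<le> p * Iq" using c by (simp add: field_simps)
      also have "\<dots> \<le> p * Ik" using \<open>Iq \<le> Ik\<close> assms by simp
      also have "\<dots> \<le> p / (1 - (1 - p) ^ k) * Ik"
      proof -
        have "0 \<le> p * Iq" using \<open>c * \<gamma> \<le> p * Iq\<close> c g0
          by (meson mult_nonneg_nonneg less_imp_le order_trans)
        hence "0 \<le> Ik" using assms \<open>Iq \<le> Ik\<close> by (simp add: zero_le_mult_iff)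
        moreover have "p \<le> p / (1 - (1 - p) ^ k)"
          using dpos[OF k] assms by (simp add: le_divide_eq)
        ultimately show ?thesis by (intro mult_right_mono)
      qed
      finally show ?thesis by (simp add: obj_G Ik_def)
    qed
    thus ?thesis unfolding Si_def using f g0 c by auto
  qed
  have "Sup Sq \<le> gamma_inf p / c"
  proof (rule cSup_least[OF ne])
    fix x assume "x \<in> Sq"
    hence "c * x \<le> gamma_inf p" unfolding gamma_inf_def Si_def[symmetric]
      using key bdd by (intro cSup_upper) auto
    thus "x \<le> gamma_inf p / c" using c by (simp add: field_simps)
  qed
  hence "c * Sup Sq \<le> gamma_inf p" using c by (simp add: field_simps)
  thus ?thesis unfolding c_def Sq_def gamma_q_def by simp
qed

end
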